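(* Let $(W,S)$ be a Coxeter system with $S$ finite. Then $\operatorname{Ad}(Q_W)$ is generated by the elements $e_s$ ($s\in S$).
   Context: A Coxeter system $(W,S)$: $S$ finite, $m:S\times S\to\mathbb{N}\cup\{\infty\}$ with $m(s,s)=1$, $2\le m(s,t)=m(t,s)\le\infty$ for $s\ne t$, $W=\langle s\in S\mid (st)^{m(s,t)}=1\ (m(s,t)<\infty)\rangle$. The Coxeter quandle is $Q_W=\bigcup_{w\in W}w^{-1}Sw$ with operation $x\ast y=yxy$, and $\operatorname{Ad}(Q_W)=\langle e_x\ (x\in Q_W)\mid e_y^{-1}e_xe_y=e_{x\ast y}\ (x,y\in Q_W)\rangle$. *)

theory Defs
  imports Main "HOL-Library.Extended_Nat"
begin

text \<open>Groups given by generators and relations, realised concretely as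
  equivalence classes of words.  A word is a list of letters; the letter
  (x, False) stands for the generator x and (x, True) for its inverse.\<close>

type_synonym 'x word = "('x \<times> bool) list"

definition word_over :: "'x set \<Rightarrow> 'x word \<Rightarrow> bool" where
  "word_over X w \<longleftrightarrow> fst ` set w \<subseteq> X"

definition inv_word :: "'x word \<Rightarrow> 'x word" where
  "inv_word w = rev (map (\<lambda>(x, b). (x, \<not> b)) w)"

inductive pres_eq :: "('x word \<times> 'x word) set \<Rightarrow> 'x word \<Rightarrow> 'x word \<Rightarrow> bool"
  for R where
  refl: "pres_eq R w w"
| sym: "pres_eq R v w \<Longrightarrow> pres_eq R w v"
| trans: "pres_eq R u v \<Longrightarrow> pres_eq R v w \<Longrightarrow> pres_eq R u w"
| cancel: "pres_eq R (u @ [(x, b), (x, \<not> b)] @ v) (u @ v)"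
| rel: "(r1, r2) \<in> R \<Longrightarrow> pres_eq R (u @ r1 @ v) (u @ r2 @ v)"

definition pres_class :: "('x word \<times> 'x word) set \<Rightarrow> 'x word \<Rightarrow> 'x word set" where
  "pres_class R w = {v. pres_eq R w v}"

definition coxeter_matrix :: "'a set \<Rightarrow> ('a \<Rightarrow> 'a \<Rightarrow> enat) \<Rightarrow> bool" where
  "coxeter_matrix S m \<longleftrightarrow>
     (\<forall>s\<in>S. m s s = 1) \<and>
     (\<forall>s\<in>S. \<forall>t\<in>S. s \<noteq> t \<longrightarrow> 2 \<le> m s t \<and> m s t = m t s)"

definition cox_rels :: "'a set \<Rightarrow> ('a \<Rightarrow> 'a \<Rightarrow> enat) \<Rightarrow> ('a word \<times> 'a word) set" where
  "cox_rels S m = {(concat (replicate k [(s, False), (t, False)]), []) | s t k.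
                     s \<in> S \<and> t \<in> S \<and> m s t = enat k}"

definition cox_elt :: "'a set \<Rightarrow> ('a \<Rightarrow> 'a \<Rightarrow> enat) \<Rightarrow> 'a word \<Rightarrow> 'a word set" where
  "cox_elt S m w = pres_class (cox_rels S m) w"

definition coxeter_quandle :: "'a set \<Rightarrow> ('a \<Rightarrow> 'a \<Rightarrow> enat) \<Rightarrow> 'a word set set" where
  "coxeter_quandle S m = {cox_elt S m (inv_word w @ [(s, False)] @ w) | w s.
                            word_over S w \<and> s \<in> S}"

text \<open>Relations of Ad(Q_W): e_y^{-1} e_x e_y = e_{x*y} where x*y = yxy in W.\<close>
definition ad_rels :: "'a set \<Rightarrow> ('a \<Rightarrow> 'a \<Rightarrow> enat) \<Rightarrow> ('a word set word \<times> 'a word set word) set" where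
  "ad_rels S m = {([(y, True), (x, False), (y, False)], [(cox_elt S m (b @ a @ b), False)]) | x y a b.
                    x \<in> coxeter_quandle S m \<and> y \<in> coxeter_quandle S m \<and>
                    word_over S a \<and> word_over S b \<and> x = cox_elt S m a \<and> y = cox_elt S m b}"

definition ad_generated_by :: "'a set \<Rightarrow> ('a \<Rightarrow> 'a \<Rightarrow> enat) \<Rightarrow> 'a word set set \<Rightarrow> bool" where
  "ad_generated_by S m E \<longleftrightarrow>
     (\<forall>w. word_over (coxeter_quandle S m) w \<longrightarrow>
        (\<exists>v. word_over E v \<and> pres_eq (ad_rels S m) w v))"

end

theory Submission
  imports Defs
begin

lemma pres_eq_ctx: "pres_eq R u v \<Longrightarrow> pres_eq R (p @ u @ q) (p @ v @ q)"
proof (induction rule: pres_eq.induct)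
  case (refl w) then show ?case by (rule pres_eq.refl)
next
  case (sym v w) then show ?case by (blast intro: pres_eq.sym)
next
  case (trans u v w) then show ?case by (blast intro: pres_eq.trans)
next
  case (cancel u x b v)
  have "pres_eq R ((p @ u) @ [(x, b), (x, \<not> b)] @ (v @ q)) ((p @ u) @ (v @ q))"
    by (rule pres_eq.cancel)
  then show ?case by simp
next
  case (rel r1 r2 u v)
  have "pres_eq R ((p @ u) @ r1 @ (v @ q)) ((p @ u) @ r2 @ (v @ q))"
    by (rule pres_eq.rel[OF rel])
  then show ?case by simp
qed

lemma pres_eq_app: "pres_eq R u u' \<Longrightarrow> pres_eq R v v' \<Longrightarrow> pres_eq R (u @ v) (u' @ v')"
proof -
  assume a: "pres_eq R u u'" and b: "pres_eq R v v'"
  have "pres_eq R ([] @ u @ v) ([] @ u' @ v)" by (rule pres_eq_ctx[OF a])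
  moreover have "pres_eq R (u' @ v @ []) (u' @ v' @ [])" by (rule pres_eq_ctx[OF b])
  ultimately show ?thesis by (auto intro: pres_eq.trans)
qed

lemma pres_eq_inv_cancel: "pres_eq R (v @ inv_word v) []"
proof (induction v)
  case Nil then show ?case by (simp add: inv_word_def pres_eq.refl)
next
  case (Cons a v)
  obtain x b where ab: "a = (x, b)" by (cases a)
  have e: "(a # v) @ inv_word (a # v) = [a] @ (v @ inv_word v) @ [(x, \<not> b)]"
    by (simp add: inv_word_def ab)
  have "pres_eq R ([a] @ (v @ inv_word v) @ [(x, \<not> b)]) ([a] @ [] @ [(x, \<not> b)])"
    by (rule pres_eq_ctx[OF Cons])
  moreover have "pres_eq R ([] @ [(x, b), (x, \<not> b)] @ []) ([] @ [])"
    by (rule pres_eq.cancel)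
  ultimately show ?case using e ab by (auto intro: pres_eq.trans)
qed

lemma pres_class_eq: "pres_eq R u v \<Longrightarrow> pres_class R u = pres_class R v"
  unfolding pres_class_def by (auto intro: pres_eq.trans pres_eq.sym)

lemma word_over_app: "word_over X (u @ v) \<longleftrightarrow> word_over X u \<and> word_over X v"
  by (auto simp: word_over_def)

lemma word_over_inv: "word_over X (inv_word v) = word_over X v"
  by (force simp: word_over_def inv_word_def image_image split_def)

lemma cox_letter:
  assumes "coxeter_matrix S m" "t \<in> S"
  shows "pres_eq (cox_rels S m) [(t, bt)] [(t, False)]"
proof (cases bt)
  case False then show ?thesis by (simp add: pres_eq.refl)
next
  case True
  have mt: "m t t = enat 1" using assms by (simp add: coxeter_matrix_def one_enat_def)
  have r: "([(t, False), (t, False)], []) \<in> cox_rels S m"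
    unfolding cox_rels_def using assms(2) mt
    by (intro CollectI exI[of _ t] exI[of _ 1]) simp
  have "pres_eq (cox_rels S m) ([(t, True)] @ [(t, False), (t, False)] @ []) ([(t, True)] @ [] @ [])"
    by (rule pres_eq.rel[OF r])
  then have 1: "pres_eq (cox_rels S m) [(t, True)] [(t, True), (t, False), (t, False)]"
    by (simp add: pres_eq.sym)
  have "pres_eq (cox_rels S m) ([] @ [(t, True), (t, \<not> True)] @ [(t, False)]) ([] @ [(t, False)])"
    by (rule pres_eq.cancel)
  then have 2: "pres_eq (cox_rels S m) [(t, True), (t, False), (t, False)] [(t, False)]" by simp
  show ?thesis using 1 2 True by (auto intro: pres_eq.trans)
qed

lemma gen_pos:
  assumes cm: "coxeter_matrix S m" and s: "s \<in> S"
  shows "word_over S w \<Longrightarrow> \<exists>v. word_over ((\<lambda>s. cox_elt S m [(s, False)]) ` S) v \<and>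
     pres_eq (ad_rels S m) [(cox_elt S m (inv_word w @ [(s, False)] @ w), False)] v"
proof (induction w rule: rev_induct)
  case Nil
  show ?case
    by (rule exI[of _ "[(cox_elt S m [(s, False)], False)]"])
       (auto simp: word_over_def inv_word_def s pres_eq.refl)
next
  case (snoc tb w)
  obtain t bt where tb: "tb = (t, bt)" by (cases tb)
  have t: "t \<in> S" and w: "word_over S w" using snoc.prems tb by (auto simp: word_over_def)
  obtain v where v: "word_over ((\<lambda>s. cox_elt S m [(s, False)]) ` S) v"
    and pv: "pres_eq (ad_rels S m) [(cox_elt S m (inv_word w @ [(s, False)] @ w), False)] v"
    using snoc.IH w by blast
  define a where "a = inv_word w @ [(s, False)] @ w"
  define b where "b = [(t, False)]"
  define x where "x = cox_elt S m a"
  define y where "y = cox_elt S m b"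
  have xQ: "x \<in> coxeter_quandle S m" unfolding coxeter_quandle_def x_def a_def using w s by blast
  have yQ: "y \<in> coxeter_quandle S m" unfolding coxeter_quandle_def y_def b_def
    using t by (intro CollectI exI[of _ "[]"] exI[of _ t]) (simp add: inv_word_def word_over_def)
  have aS: "word_over S a" using w s by (simp add: a_def word_over_app word_over_inv) (simp add: word_over_def)
  have bS: "word_over S b" using t by (simp add: b_def word_over_def)
  have rel: "([(y, True), (x, False), (y, False)], [(cox_elt S m (b @ a @ b), False)]) \<in> ad_rels S m"
    unfolding ad_rels_def using xQ yQ aS bS x_def y_def by blast
  have tt: "pres_eq (cox_rels S m) [(t, \<not> bt)] [(t, False)]"
           "pres_eq (cox_rels S m) [(t, bt)] [(t, False)]"
    using cox_letter[OF cm t] by auto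
  have "pres_eq (cox_rels S m) ([(t, \<not> bt)] @ a @ [(t, bt)]) (b @ a @ b)"
    unfolding b_def by (intro pres_eq_app tt pres_eq.refl)
  then have ceq: "cox_elt S m (inv_word (w @ [tb]) @ [(s, False)] @ (w @ [tb])) = cox_elt S m (b @ a @ b)"
    unfolding cox_elt_def by (intro pres_class_eq) (simp add: a_def tb inv_word_def)
  have "pres_eq (ad_rels S m) ([] @ [(y, True), (x, False), (y, False)] @ []) ([] @ [(cox_elt S m (b @ a @ b), False)] @ [])"
    by (rule pres_eq.rel[OF rel])
  then have 1: "pres_eq (ad_rels S m) [(cox_elt S m (inv_word (w @ [tb]) @ [(s, False)] @ (w @ [tb])), False)]
        ([(y, True)] @ [(x, False)] @ [(y, False)])"
    using ceq by (simp add: pres_eq.sym)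
  have 2: "pres_eq (ad_rels S m) ([(y, True)] @ [(x, False)] @ [(y, False)]) ([(y, True)] @ v @ [(y, False)])"
    by (rule pres_eq_ctx) (use pv in \<open>simp add: x_def a_def\<close>)
  have yE: "y \<in> (\<lambda>s. cox_elt S m [(s, False)]) ` S" using t by (simp add: y_def b_def)
  have "word_over ((\<lambda>s. cox_elt S m [(s, False)]) ` S) ([(y, True)] @ v @ [(y, False)])"
    using v yE by (simp add: word_over_app) (simp add: word_over_def)
  then show ?case using 1 2 by (blast intro: pres_eq.trans)
qed

lemma gen_letter:
  assumes cm: "coxeter_matrix S m" and x: "x \<in> coxeter_quandle S m"
  shows "\<exists>v. word_over ((\<lambda>s. cox_elt S m [(s, False)]) ` S) v \<and> pres_eq (ad_rels S m) [(x, c)] v"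
proof -
  obtain w s where ws: "x = cox_elt S m (inv_word w @ [(s, False)] @ w)" "word_over S w" "s \<in> S"
    using x unfolding coxeter_quandle_def by blast
  obtain v where v: "word_over ((\<lambda>s. cox_elt S m [(s, False)]) ` S) v"
    and pv: "pres_eq (ad_rels S m) [(x, False)] v"
    using gen_pos[OF cm ws(3) ws(2)] ws(1) by blast
  show ?thesis
  proof (cases c)
    case False then show ?thesis using v pv by (intro exI[of _ v]) simp
  next
    case True
    have "pres_eq (ad_rels S m) ([(x, True)] @ (v @ inv_word v) @ []) ([(x, True)] @ [] @ [])"
      by (rule pres_eq_ctx[OF pres_eq_inv_cancel])
    then have 1: "pres_eq (ad_rels S m) [(x, True)] ([(x, True)] @ v @ inv_word v)"
      by (simp add: pres_eq.sym)
    have 2: "pres_eq (ad_rels S m) ([(x, True)] @ v @ inv_word v) ([(x, True)] @ [(x, False)] @ inv_word v)"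
      by (rule pres_eq_ctx) (rule pres_eq.sym[OF pv])
    have "pres_eq (ad_rels S m) ([] @ [(x, True), (x, \<not> True)] @ inv_word v) ([] @ inv_word v)"
      by (rule pres_eq.cancel)
    then have 3: "pres_eq (ad_rels S m) ([(x, True)] @ [(x, False)] @ inv_word v) (inv_word v)" by simp
    show ?thesis using 1 2 3 v True
      by (intro exI[of _ "inv_word v"]) (auto simp: word_over_inv intro: pres_eq.trans)
  qed
qed

theorem proposition2p3:
  fixes S :: "'a set" and m :: "'a \<Rightarrow> 'a \<Rightarrow> enat"
  assumes "finite S" and "coxeter_matrix S m"
  shows "ad_generated_by S m ((\<lambda>s. cox_elt S m [(s, False)]) ` S)"
  unfolding ad_generated_by_def
proof (intro allI impI)
  fix w :: "'a word set word"
  assume "word_over (coxeter_quandle S m) w"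
  then show "\<exists>v. word_over ((\<lambda>s. cox_elt S m [(s, False)]) ` S) v \<and> pres_eq (ad_rels S m) w v"
  proof (induction w)
    case Nil then show ?case by (intro exI[of _ "[]"]) (simp add: word_over_def pres_eq.refl)
  next
    case (Cons a w)
    obtain x c where a: "a = (x, c)" by (cases a)
    have x: "x \<in> coxeter_quandle S m" and w: "word_over (coxeter_quandle S m) w"
      using Cons.prems a by (auto simp: word_over_def)
    obtain v1 where v1: "word_over ((\<lambda>s. cox_elt S m [(s, False)]) ` S) v1" "pres_eq (ad_rels S m) [(x, c)] v1"
      using gen_letter[OF assms(2) x] by blast
    obtain v2 where v2: "word_over ((\<lambda>s. cox_elt S m [(s, False)]) ` S) v2" "pres_eq (ad_rels S m) w v2"
      using Cons.IH[OF w] by blast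
    have "pres_eq (ad_rels S m) ([(x, c)] @ w) (v1 @ v2)" by (rule pres_eq_app[OF v1(2) v2(2)])
    then show ?case using v1(1) v2(1) a by (intro exI[of _ "v1 @ v2"]) (simp add: word_over_app)
  qed
qed

end
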